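(* Let $R\subseteq S_n$ be a top-$k$ partial ranking with $n-k\ge2$, let $\sigma_0\in R$ be fixed, and let $\sigma$ be uniformly distributed on $R$. Put $X=d(\sigma,\sigma_0)$ and $Y=d(A_R(\sigma),\sigma_0)$. Then $\mathrm{Cov}(X,Y)<0$.
   Context: $S_n$ is the symmetric group on $[n]$; $\sigma\in S_n$ is identified with the full ranking $\sigma(1)\succ\cdots\succ\sigma(n)$. For distinct items $x,y$, $\{x,y\}$ is discordant for $\sigma,\tau$ if $(\sigma^{-1}(x)-\sigma^{-1}(y))(\tau^{-1}(x)-\tau^{-1}(y))<0$. The Kendall distance $d(\sigma,\tau)$ is the number of unordered discordant pairs. For $0\le k\le n$ and distinct $a_1,\dots,a_k\in[n]$, the top-$k$ partial ranking is the set $R=\{\sigma\in S_n:\sigma(i)=a_i,\ i\le k\}$ ($R=S_n$ when $k=0$). The antithetic operator $A_R:R\to R$ is $A_R(\sigma)(i)=a_i$ for $i\le k$ and $A_R(\sigma)(k+j)=\sigma(n+1-j)$ for $j=1,\dots,n-k$. *)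

theory Defs
  imports "HOL-Probability.Probability" "HOL-Combinatorics.Permutations"
begin

text \<open>A permutation sigma of {1..n} is read as the ranking sigma 1 > ... > sigma n;
  inv sigma x is the position of item x.\<close>

definition discordant :: "(nat \<Rightarrow> nat) \<Rightarrow> (nat \<Rightarrow> nat) \<Rightarrow> nat \<Rightarrow> nat \<Rightarrow> bool" where
  "discordant \<sigma> \<tau> x y \<longleftrightarrow>
     (int (inv \<sigma> x) - int (inv \<sigma> y)) * (int (inv \<tau> x) - int (inv \<tau> y)) < 0"

definition kendall :: "nat \<Rightarrow> (nat \<Rightarrow> nat) \<Rightarrow> (nat \<Rightarrow> nat) \<Rightarrow> nat" where
  "kendall n \<sigma> \<tau> = card {p :: nat set. \<exists>x y. p = {x, y} \<and> x \<in> {1..n} \<and> y \<in> {1..n} \<and> x \<noteq> y \<and> discordant \<sigma> \<tau> x y}"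

definition topk :: "nat \<Rightarrow> nat \<Rightarrow> (nat \<Rightarrow> nat) \<Rightarrow> (nat \<Rightarrow> nat) set" where
  "topk n k a = {\<sigma>. \<sigma> permutes {1..n} \<and> (\<forall>i\<in>{1..k}. \<sigma> i = a i)}"

definition antithetic :: "nat \<Rightarrow> nat \<Rightarrow> (nat \<Rightarrow> nat) \<Rightarrow> (nat \<Rightarrow> nat) \<Rightarrow> (nat \<Rightarrow> nat)" where
  "antithetic n k a \<sigma> = (\<lambda>i. if 1 \<le> i \<and> i \<le> k then a i
                             else if k < i \<and> i \<le> n then \<sigma> (n + 1 - (i - k))
                             else i)"

definition covariance :: "'a measure \<Rightarrow> ('a \<Rightarrow> real) \<Rightarrow> ('a \<Rightarrow> real) \<Rightarrow> real" where
  "covariance M X Y = (\<integral>x. (X x - (\<integral>z. X z \<partial>M)) * (Y x - (\<integral>z. Y z \<partial>M)) \<partial>M)"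

end

theory Submission imports Defs begin

definition rv :: "nat \<Rightarrow> nat \<Rightarrow> nat \<Rightarrow> nat" where
  "rv n k i = (if k < i \<and> i \<le> n then n + 1 + k - i else i)"

lemma rv_rv: "rv n k (rv n k i) = i"
  unfolding rv_def by auto

lemma rv_permutes: "rv n k permutes {1..n}"
  unfolding permutes_def
proof (intro conjI allI impI)
  fix x assume "x \<notin> {1..n}" thus "rv n k x = x" unfolding rv_def by auto
next
  fix y show "\<exists>!x. rv n k x = y"
    by (rule ex1I[of _ "rv n k y"]) (auto simp: rv_rv dest: arg_cong[of _ _ "rv n k"])
qed

lemma inv_rv: "inv (rv n k) = rv n k"
  by (rule inv_unique_comp) (auto simp: fun_eq_iff rv_rv)

lemma anti_eq:
  assumes "\<sigma> \<in> topk n k a"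
  shows "antithetic n k a \<sigma> = \<sigma> \<circ> rv n k"
proof
  fix i
  have p: "\<sigma> permutes {1..n}" and t: "\<forall>i\<in>{1..k}. \<sigma> i = a i" using assms by (auto simp: topk_def)
  show "antithetic n k a \<sigma> i = (\<sigma> \<circ> rv n k) i"
  proof (cases "1 \<le> i \<and> i \<le> k")
    case True thus ?thesis using t by (auto simp: antithetic_def rv_def)
  next
    case False
    show ?thesis
    proof (cases "k < i \<and> i \<le> n")
      case True
      hence "n + 1 - (i - k) = n + 1 + k - i" by auto
      thus ?thesis using True False by (simp add: antithetic_def rv_def)
    next
      case F2: False
      hence "i \<notin> {1..n}" using False by auto
      hence "\<sigma> i = i" using p by (simp add: permutes_not_in)
      thus ?thesis using False F2 by (auto simp add: antithetic_def rv_def)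
    qed
  qed
qed

lemma anti_in:
  assumes "\<sigma> \<in> topk n k a"
  shows "antithetic n k a \<sigma> \<in> topk n k a"
proof -
  have p: "\<sigma> permutes {1..n}" using assms by (auto simp: topk_def)
  have "antithetic n k a \<sigma> permutes {1..n}"
    unfolding anti_eq[OF assms] by (rule permutes_compose[OF rv_permutes p])
  thus ?thesis unfolding topk_def by (auto simp: antithetic_def)
qed

lemma inv_anti:
  assumes "\<sigma> \<in> topk n k a"
  shows "inv (antithetic n k a \<sigma>) = rv n k \<circ> inv \<sigma>"
proof -
  have p: "\<sigma> permutes {1..n}" using assms by (auto simp: topk_def)
  show ?thesis unfolding anti_eq[OF assms]
    using o_inv_distrib[OF permutes_bij[OF p] permutes_bij[OF rv_permutes]] inv_rv by simp
qed

lemma pos_top: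
  assumes "\<sigma> \<in> topk n k a" "i \<in> {1..k}"
  shows "inv \<sigma> (a i) = i"
proof -
  have p: "\<sigma> permutes {1..n}" and t: "\<sigma> i = a i" using assms by (auto simp: topk_def)
  show ?thesis using permutes_inverses(2)[OF p, of i] t by simp
qed

lemma pos_range:
  assumes "\<sigma> \<in> topk n k a" "x \<in> {1..n}"
  shows "inv \<sigma> x \<in> {1..n}"
proof -
  have p: "\<sigma> permutes {1..n}" using assms by (auto simp: topk_def)
  show ?thesis using permutes_in_image[OF permutes_inv[OF p]] assms(2) by simp
qed

lemma pos_bot:
  assumes "\<sigma> \<in> topk n k a" "x \<in> {1..n}" "x \<notin> a ` {1..k}"
  shows "k < inv \<sigma> x"
proof (rule ccontr)
  assume "\<not> k < inv \<sigma> x"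
  hence "inv \<sigma> x \<in> {1..k}" using pos_range[OF assms(1,2)] by auto
  moreover have p: "\<sigma> permutes {1..n}" using assms by (auto simp: topk_def)
  ultimately have "\<sigma> (inv \<sigma> x) = a (inv \<sigma> x)" using assms(1) by (auto simp: topk_def)
  hence "x = a (inv \<sigma> x)" using permutes_inverses(1)[OF p] by simp
  thus False using assms(3) \<open>inv \<sigma> x \<in> {1..k}\<close> by auto
qed

lemma disc_sym: "discordant s t x y = discordant s t y x"
  unfolding discordant_def by (smt (verit) mult_minus_left mult_minus_right)

lemma disc_bot:
  assumes s: "\<sigma> \<in> topk n k a" and s0: "\<sigma>0 \<in> topk n k a"
    and x: "x \<in> {1..n}" and y: "y \<in> {1..n}" and d: "discordant \<sigma> \<sigma>0 x y"
  shows "x \<notin> a ` {1..k}"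
proof
  assume "x \<in> a ` {1..k}"
  then obtain i where i: "i \<in> {1..k}" "x = a i" by auto
  have ux: "inv \<sigma> x = i" "inv \<sigma>0 x = i" using pos_top[OF s i(1)] pos_top[OF s0 i(1)] i by auto
  show False
  proof (cases "y \<in> a ` {1..k}")
    case True
    then obtain j where j: "j \<in> {1..k}" "y = a j" by auto
    have "inv \<sigma> y = j" "inv \<sigma>0 y = j" using pos_top[OF s j(1)] pos_top[OF s0 j(1)] j by auto
    thus False using d ux unfolding discordant_def
      by (metis not_square_less_zero)
  next
    case False
    have "k < inv \<sigma> y" "k < inv \<sigma>0 y" using pos_bot[OF s y False] pos_bot[OF s0 y False] by auto
    hence "int i - int (inv \<sigma> y) < 0" "int i - int (inv \<sigma>0 y) < 0" using i by auto
    hence "(int i - int (inv \<sigma> y)) * (int i - int (inv \<sigma>0 y)) > 0" by (rule mult_neg_neg)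
    thus False using d ux unfolding discordant_def by simp
  qed
qed

lemma disc_flip:
  assumes s: "\<sigma> \<in> topk n k a" and s0: "\<sigma>0 \<in> topk n k a"
    and x: "x \<in> {1..n}" and y: "y \<in> {1..n}" and xy: "x \<noteq> y"
    and bx: "x \<notin> a ` {1..k}" and bY: "y \<notin> a ` {1..k}"
  shows "discordant (antithetic n k a \<sigma>) \<sigma>0 x y \<longleftrightarrow> \<not> discordant \<sigma> \<sigma>0 x y"
proof -
  have p: "\<sigma> permutes {1..n}" and p0: "\<sigma>0 permutes {1..n}" using s s0 by (auto simp: topk_def)
  define u where "u = inv \<sigma> x"
  define v where "v = inv \<sigma> y"
  have ku: "k < u" "u \<le> n" "k < v" "v \<le> n" using pos_bot[OF s x bx] pos_bot[OF s y bY]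
     pos_range[OF s x] pos_range[OF s y] unfolding u_def v_def by auto
  have uv: "u \<noteq> v" unfolding u_def v_def using xy permutes_inverses(1)[OF p] by metis
  have u0v0: "inv \<sigma>0 x \<noteq> inv \<sigma>0 y" using xy permutes_inverses(1)[OF p0] by metis
  have ia: "inv (antithetic n k a \<sigma>) x = n + 1 + k - u" "inv (antithetic n k a \<sigma>) y = n + 1 + k - v"
    using ku unfolding inv_anti[OF s] u_def v_def by (auto simp: rv_def)
  have e: "int (n + 1 + k - u) - int (n + 1 + k - v) = - (int u - int v)" using ku by auto
  define P where "P = (int u - int v) * (int (inv \<sigma>0 x) - int (inv \<sigma>0 y))"
  have "P \<noteq> 0" unfolding P_def using uv u0v0 by auto
  thus ?thesis unfolding discordant_def ia e u_def[symmetric] v_def[symmetric]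
    using P_def by (smt (verit) mult_minus_left)
qed

lemma cov_neg:
  fixes R :: "'a set" and f g :: "'a \<Rightarrow> real"
  assumes fin: "finite R" and s0: "s0 \<in> R" and s1: "s1 \<in> R"
    and g: "\<And>s. s \<in> R \<Longrightarrow> g s = c - f s" and ne: "f s0 \<noteq> f s1"
  shows "covariance (measure_pmf (pmf_of_set R)) f g < 0"
proof -
  have Rne: "R \<noteq> {}" using s0 by auto
  have N: "real (card R) > 0" using fin Rne by (simp add: card_gt_0_iff)
  define mu where "mu = sum f R / card R"
  have Ef: "(\<integral>z. f z \<partial>measure_pmf (pmf_of_set R)) = mu"
    unfolding mu_def by (rule integral_pmf_of_set[OF Rne fin])
  have "(\<integral>z. g z \<partial>measure_pmf (pmf_of_set R)) = sum g R / card R"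
    by (rule integral_pmf_of_set[OF Rne fin])
  also have "sum g R = (\<Sum>s\<in>R. c - f s)" using g by (rule sum.cong[OF refl])
  also have "\<dots> = card R * c - sum f R" by (simp add: sum_subtractf)
  finally have Eg: "(\<integral>z. g z \<partial>measure_pmf (pmf_of_set R)) = c - mu"
    unfolding mu_def using N by (simp add: field_simps)
  have "covariance (measure_pmf (pmf_of_set R)) f g
      = (\<Sum>s\<in>R. (f s - mu) * (g s - (c - mu))) / card R"
    unfolding covariance_def Ef Eg by (rule integral_pmf_of_set[OF Rne fin])
  also have "(\<Sum>s\<in>R. (f s - mu) * (g s - (c - mu))) = - (\<Sum>s\<in>R. (f s - mu)^2)"
    by (simp add: g sum_negf[symmetric] power2_eq_square algebra_simps cong: sum.cong)
  also have "(\<Sum>s\<in>R. (f s - mu)^2) > 0"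
  proof (rule ccontr)
    assume "\<not> ?thesis"
    hence "(\<Sum>s\<in>R. (f s - mu)^2) = 0" using sum_nonneg[of R "\<lambda>s. (f s - mu)^2"] by fastforce
    hence "\<forall>s\<in>R. (f s - mu)^2 = 0" using fin by (simp add: sum_nonneg_eq_0_iff)
    hence "f s0 = mu" "f s1 = mu" using s0 s1 by auto
    thus False using ne by simp
  qed
  hence "- (\<Sum>s\<in>R. (f s - mu)^2) / card R < 0" using N by (simp add: divide_neg_pos)
  finally show ?thesis .
qed

lemma disc_refl: "\<not> discordant s s x y"
  unfolding discordant_def by (metis not_square_less_zero)

lemma count:
  assumes s: "\<sigma> \<in> topk n k a" and s0: "\<sigma>0 \<in> topk n k a"
  shows "kendall n \<sigma> \<sigma>0 + kendall n (antithetic n k a \<sigma>) \<sigma>0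
     = card {p :: nat set. \<exists>x y. p = {x, y} \<and> x \<in> {1..n} - a ` {1..k} \<and> y \<in> {1..n} - a ` {1..k} \<and> x \<noteq> y}"
proof -
  let ?B = "{1..n} - a ` {1..k}"
  let ?A = "antithetic n k a \<sigma>"
  define D where "D s = {p :: nat set. \<exists>x y. p = {x, y} \<and> x \<in> {1..n} \<and> y \<in> {1..n} \<and> x \<noteq> y \<and> discordant s \<sigma>0 x y}" for s
  define Q where "Q = {p :: nat set. \<exists>x y. p = {x, y} \<and> x \<in> ?B \<and> y \<in> ?B \<and> x \<noteq> y}"
  have As: "?A \<in> topk n k a" by (rule anti_in[OF s])
  have fin: "finite (D s)" for s
    by (rule finite_subset[of _ "Pow {1..n}"]) (auto simp: D_def)
  have un: "D \<sigma> \<union> D ?A = Q"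
  proof
    show "D \<sigma> \<union> D ?A \<subseteq> Q"
    proof
      fix p assume "p \<in> D \<sigma> \<union> D ?A"
      then obtain t x y where t: "t \<in> topk n k a" and p: "p = {x,y}" "x \<in> {1..n}" "y \<in> {1..n}" "x \<noteq> y"
        "discordant t \<sigma>0 x y" using s As unfolding D_def by blast
      have "x \<notin> a ` {1..k}" using disc_bot[OF t s0 p(2,3,5)] .
      moreover have "y \<notin> a ` {1..k}" using disc_bot[OF t s0 p(3,2)] p(5) disc_sym by metis
      ultimately show "p \<in> Q" using p unfolding Q_def by blast
    qed
  next
    show "Q \<subseteq> D \<sigma> \<union> D ?A"
    proof
      fix p assume "p \<in> Q"
      then obtain x y where p: "p = {x,y}" "x \<in> ?B" "y \<in> ?B" "x \<noteq> y" unfolding Q_def by blast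
      have "discordant ?A \<sigma>0 x y \<or> discordant \<sigma> \<sigma>0 x y"
        using disc_flip[OF s s0, of x y] p by auto
      thus "p \<in> D \<sigma> \<union> D ?A" using p unfolding D_def by blast
    qed
  qed
  have dis: "D \<sigma> \<inter> D ?A = {}"
  proof (rule ccontr)
    assume "D \<sigma> \<inter> D ?A \<noteq> {}"
    then obtain p where "p \<in> D \<sigma>" "p \<in> D ?A" by blast
    then obtain x y x' y' where p: "p = {x,y}" "x \<in> {1..n}" "y \<in> {1..n}" "x \<noteq> y"
        "discordant \<sigma> \<sigma>0 x y" and p': "p = {x',y'}" "discordant ?A \<sigma>0 x' y'"
      unfolding D_def by blast
    have "discordant ?A \<sigma>0 x y" using p p' disc_sym by (metis doubleton_eq_iff)
    moreover have "x \<notin> a ` {1..k}" using disc_bot[OF s s0 p(2,3,5)] .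
    moreover have "y \<notin> a ` {1..k}" using disc_bot[OF s s0 p(3,2)] p(5) disc_sym by metis
    ultimately show False using disc_flip[OF s s0 p(2,3,4)] p(5) by simp
  qed
  have "kendall n \<sigma> \<sigma>0 + kendall n ?A \<sigma>0 = card (D \<sigma>) + card (D ?A)"
    unfolding kendall_def D_def by simp
  also have "\<dots> = card Q" using card_Un_disjoint[OF fin fin dis] un by simp
  finally show ?thesis unfolding Q_def .
qed

theorem proposition2:
  fixes n k :: nat and a :: "nat \<Rightarrow> nat" and \<sigma>\<^sub>0 :: "nat \<Rightarrow> nat"
  assumes "k \<le> n" and "n - k \<ge> 2"
    and "inj_on a {1..k}" and "a ` {1..k} \<subseteq> {1..n}"
    and "\<sigma>\<^sub>0 \<in> topk n k a"
  shows "covariance (measure_pmf (pmf_of_set (topk n k a)))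
           (\<lambda>\<sigma>. real (kendall n \<sigma> \<sigma>\<^sub>0))
           (\<lambda>\<sigma>. real (kendall n (antithetic n k a \<sigma>) \<sigma>\<^sub>0)) < 0"
proof -
  let ?B = "{1..n} - a ` {1..k}"
  define Q where "Q = {p :: nat set. \<exists>x y. p = {x, y} \<and> x \<in> ?B \<and> y \<in> ?B \<and> x \<noteq> y}"
  have finR: "finite (topk n k a)"
    by (rule finite_subset[of _ "{p. p permutes {1..n}}"]) (auto simp: topk_def finite_permutations)
  have cB: "card ?B = n - k"
    using card_Diff_subset[OF finite_imageI assms(4)] card_image[OF assms(3)] by simp
  hence "card ?B \<ge> 2" using assms(2) by simp
  then obtain x where x: "x \<in> ?B" by (metis card.empty ex_in_conv not_numeral_le_zero)
  have "card (?B - {x}) \<ge> 1" using x \<open>card ?B \<ge> 2\<close> by simp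
  then obtain y where y: "y \<in> ?B - {x}" by (metis card.empty ex_in_conv not_one_le_zero)
  have "{x,y} \<in> Q" using x y unfolding Q_def by blast
  moreover have "finite Q" by (rule finite_subset[of _ "Pow {1..n}"]) (auto simp: Q_def)
  ultimately have Qpos: "card Q > 0" by (auto simp: card_gt_0_iff)
  have k0: "kendall n \<sigma>\<^sub>0 \<sigma>\<^sub>0 = 0" unfolding kendall_def using disc_refl by simp
  have cnt: "kendall n s \<sigma>\<^sub>0 + kendall n (antithetic n k a s) \<sigma>\<^sub>0 = card Q" if "s \<in> topk n k a" for s
    using count[OF that assms(5)] unfolding Q_def .
  show ?thesis
  proof (rule cov_neg[OF finR assms(5) anti_in[OF assms(5)], where c = "real (card Q)"])
    fix s assume "s \<in> topk n k a"
    from cnt[OF this] show "real (kendall n (antithetic n k a s) \<sigma>\<^sub>0) = real (card Q) - real (kendall n s \<sigma>\<^sub>0)"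
      by linarith
  next
    show "real (kendall n \<sigma>\<^sub>0 \<sigma>\<^sub>0) \<noteq> real (kendall n (antithetic n k a \<sigma>\<^sub>0) \<sigma>\<^sub>0)"
      using cnt[OF assms(5)] k0 Qpos by simp
  qed
qed

end
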